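(* Let $K\subset(-1,0)$ be compact and fix an integer $s$. For natural numbers $N\ge 2$ and $1\le a\le N-1$, let $b_{N,a}\colon K\to\mathbb{R}$ be real-valued functions, and suppose \[ \sup\{\,|b_{N,a}(q)| : N\ge 2,\ 1\le a\le N-1,\ q\in K\,\}<\infty. \] Then \[ \sup_{q\in K}\left|\sum_{a=1}^{N-1}\binom{N}{a}\, b_{N,a}(q)\, q^{a(N-a)+s}\right|\longrightarrow 0\qquad\text{as } N\to\infty. \] *)

theory Defs
  imports "HOL-Analysis.Analysis"
begin

end

theory Submission
  imports Defs
begin

lemma term_bound:
  fixes \<rho> :: real
  assumes "1 \<le> a" "a < N" "0 \<le> \<rho>" "\<rho> \<le> 1" "real N * \<rho>^N \<le> 1"
  shows "real (N choose a) * \<rho>^(2*(a*(N-a))) \<le> real N * \<rho>^N"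
proof -
  define k where "k = min a (N-a)"
  have k1: "1 \<le> k" and kN: "2*k \<le> N" using assms unfolding k_def by auto
  have ch: "N choose a = N choose k"
    unfolding k_def using assms binomial_symmetric[of a N] by (auto simp: min_def)
  have e: "a*(N-a) = k*(N-k)" unfolding k_def using assms by (auto simp: min_def mult.commute)
  have "N \<le> 2*(N-k)" using kN by linarith
  then have "k*N \<le> k*(2*(N-k))" by (rule mult_le_mono2)
  then have "k*N \<le> 2*(k*(N-k))" by (simp add: ac_simps)
  then have p: "\<rho>^(2*(a*(N-a))) \<le> (\<rho>^N)^k"
    unfolding e power_mult[symmetric] by (metis assms(3,4) mult.commute power_decreasing)
  have b: "real (N choose k) \<le> real N ^ k"
    proof -
    have "N choose k \<le> N ^ k" using binomial_le_pow[of k N] kN by linarith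
    then show ?thesis by (metis of_nat_le_iff of_nat_power)
  qed
  have "real (N choose a) * \<rho>^(2*(a*(N-a))) \<le> real N ^ k * (\<rho>^N)^k"
    unfolding ch by (rule mult_mono[OF b p]) auto
  also have "\<dots> = (real N * \<rho>^N)^k" by (simp add: power_mult_distrib)
  also have "\<dots> \<le> (real N * \<rho>^N)^1"
    by (rule power_decreasing) (use k1 assms in auto)
  finally show ?thesis by simp
qed

lemma powi_bound:
  fixes q m :: real and s :: int
  assumes "0 < m" "m \<le> q" "q \<le> 1"
  shows "q powi s \<le> (1/m) ^ nat \<bar>s\<bar>"
proof (cases "s \<ge> 0")
  case True
  have "q ^ nat s \<le> 1" using assms by (simp add: power_le_one)
  moreover have "1 \<le> (1/m) ^ nat \<bar>s\<bar>" using assms by (simp add: one_le_power)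
  ultimately show ?thesis using True by (simp add: power_int_def)
next
  case False
  have "inverse q \<le> 1/m" using assms by (simp add: divide_simps)
  then have "inverse q ^ nat (-s) \<le> (1/m) ^ nat (-s)"
    by (rule power_mono) (use assms in auto)
  then show ?thesis using False by (simp add: power_int_def)
qed

theorem lemma2p3:
  fixes K :: "real set" and s :: int and b :: "nat \<Rightarrow> nat \<Rightarrow> real \<Rightarrow> real"
  assumes "compact K" and "K \<subseteq> {-1<..<0}"
    and "\<exists>C. \<forall>N a q. 2 \<le> N \<longrightarrow> 1 \<le> a \<longrightarrow> a \<le> N - 1 \<longrightarrow> q \<in> K \<longrightarrow> \<bar>b N a q\<bar> \<le> C"
  shows "\<forall>\<epsilon>>0. \<forall>\<^sub>F N in sequentially. \<forall>q\<in>K.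
           \<bar>\<Sum>a = 1..N - 1. real (N choose a) * b N a q * q powi (int (a * (N - a)) + s)\<bar> \<le> \<epsilon>"
proof (cases "K = {}")
  case True
  then show ?thesis by auto
next
  case False
  obtain C where C: "\<And>N a q. 2 \<le> N \<Longrightarrow> 1 \<le> a \<Longrightarrow> a \<le> N - 1 \<Longrightarrow> q \<in> K \<Longrightarrow> \<bar>b N a q\<bar> \<le> C"
    using assms(3) by blast
  obtain q0 where q0: "q0 \<in> K" "\<And>q. q \<in> K \<Longrightarrow> q0 \<le> q"
    using compact_attains_inf[OF assms(1) False] by blast
  obtain q1 where q1: "q1 \<in> K" "\<And>q. q \<in> K \<Longrightarrow> q \<le> q1"
    using compact_attains_sup[OF assms(1) False] by blast
  define r where "r = \<bar>q0\<bar>"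
  define m where "m = \<bar>q1\<bar>"
  have r01: "0 < r" "r < 1" using q0 assms(2) unfolding r_def by auto
  have m0: "0 < m" using q1 assms(2) unfolding m_def by auto
  have qr: "\<And>q. q \<in> K \<Longrightarrow> \<bar>q\<bar> \<le> r" using q0 assms(2) unfolding r_def by fastforce
  have qm: "\<And>q. q \<in> K \<Longrightarrow> m \<le> \<bar>q\<bar>" using q1 assms(2) unfolding m_def by fastforce
  define M where "M = (1/m) ^ nat \<bar>s\<bar>"
  have M0: "0 \<le> M" unfolding M_def using m0 by simp
  have qM: "\<And>q. q \<in> K \<Longrightarrow> \<bar>q\<bar> powi s \<le> M"
    unfolding M_def
  proof -
    fix q assume q: "q \<in> K"
    have "\<bar>q\<bar> \<le> 1" using qr[OF q] r01 by linarith
    then show "\<bar>q\<bar> powi s \<le> (1 / m) ^ nat \<bar>s\<bar>" using powi_bound[OF m0 qm[OF q]] by blast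
  qed
  define \<rho> where "\<rho> = sqrt r"
  define \<sigma> where "\<sigma> = sqrt \<rho>"
  have \<rho>: "0 \<le> \<rho>" "\<rho> \<le> 1" "\<rho>^2 = r" unfolding \<rho>_def using r01 by auto
  have \<sigma>: "0 \<le> \<sigma>" "\<sigma> < 1" "\<sigma>^2 = \<rho>" unfolding \<sigma>_def \<rho>_def using r01 by auto
  have "(\<lambda>N. real N * \<sigma>^N) \<longlonglongrightarrow> 0"
    using powser_times_n_limit_0[of \<sigma>] \<sigma> by simp
  then have "(\<lambda>N. (real N * \<sigma>^N)^2) \<longlonglongrightarrow> 0^2"
    by (rule tendsto_power)
  moreover have "(real N * \<sigma>^N)^2 = real N ^ 2 * \<rho>^N" for N
    proof -
    have "(real N * \<sigma>^N)^2 = real N ^ 2 * (\<sigma>^2)^N"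
      by (simp add: power_mult_distrib power_mult[symmetric] mult.commute)
    then show ?thesis using \<sigma>(3) by simp
  qed
  ultimately have lim: "(\<lambda>N. real N ^ 2 * \<rho>^N) \<longlonglongrightarrow> 0" by simp
  show ?thesis
  proof (intro allI impI)
    fix \<epsilon> :: real assume "\<epsilon> > 0"
    define \<delta> where "\<delta> = min 1 (\<epsilon> / (\<bar>C\<bar> * M + 1))"
    have \<delta>0: "\<delta> > 0" unfolding \<delta>_def using \<open>\<epsilon> > 0\<close> M0 by (simp add: add_nonneg_pos)
    have "\<forall>\<^sub>F N in sequentially. real N ^ 2 * \<rho>^N < \<delta>"
      using lim \<delta>0 by (simp add: order_tendstoD(2))
    moreover have "\<forall>\<^sub>F N in sequentially. 2 \<le> N" by (rule eventually_ge_at_top)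
    ultimately show "\<forall>\<^sub>F N in sequentially. \<forall>q\<in>K.
           \<bar>\<Sum>a = 1..N - 1. real (N choose a) * b N a q * q powi (int (a * (N - a)) + s)\<bar> \<le> \<epsilon>"
    proof eventually_elim
      case (elim N)
      have NN: "real N * \<rho>^N \<le> real N ^ 2 * \<rho>^N"
        using elim \<rho> by (intro mult_right_mono) (auto simp: power2_eq_square)
      have N1: "real N * \<rho>^N \<le> 1" using NN elim \<delta>_def by linarith
      show ?case
      proof
        fix q assume q: "q \<in> K"
        have qne: "q \<noteq> 0" using q assms(2) by auto
        have tb: "\<bar>real (N choose a) * b N a q * q powi (int (a * (N - a)) + s)\<bar>
             \<le> \<bar>C\<bar> * M * (real N * \<rho>^N)" if a: "a \<in> {1..N-1}" for a
        proof -
          have "\<bar>real (N choose a) * b N a q * q powi (int (a * (N - a)) + s)\<bar>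
              = real (N choose a) * \<bar>b N a q\<bar> * (\<bar>q\<bar> ^ (a * (N - a)) * \<bar>q\<bar> powi s)"
            using qne by (simp add: abs_mult power_int_abs power_int_add power_abs del: of_nat_mult)
          also have "\<dots> \<le> real (N choose a) * \<bar>C\<bar> * (r ^ (a * (N - a)) * M)"
            using C[of N a q] elim a q qr[OF q] qM[OF q]
            by (intro mult_mono power_mono) auto
          also have "\<dots> = \<bar>C\<bar> * M * (real (N choose a) * \<rho> ^ (2 * (a * (N - a))))"
            using \<rho>(3) by (simp add: power_mult)
          also have "\<dots> \<le> \<bar>C\<bar> * M * (real N * \<rho>^N)"
            using a elim \<rho> N1 M0 by (intro mult_left_mono term_bound) auto
          finally show ?thesis .
        qed
        have "\<bar>\<Sum>a = 1..N - 1. real (N choose a) * b N a q * q powi (int (a * (N - a)) + s)\<bar>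
            \<le> (\<Sum>a = 1..N - 1. \<bar>real (N choose a) * b N a q * q powi (int (a * (N - a)) + s)\<bar>)"
          by (rule sum_abs)
        also have "\<dots> \<le> (\<Sum>a = 1..N - 1. \<bar>C\<bar> * M * (real N * \<rho>^N))"
          by (rule sum_mono) (rule tb)
        also have "\<dots> = real (N - 1) * (\<bar>C\<bar> * M * (real N * \<rho>^N))" by simp
        also have "\<dots> \<le> real N * (\<bar>C\<bar> * M * (real N * \<rho>^N))"
          using M0 \<rho> by (intro mult_right_mono) auto
        also have "\<dots> = (\<bar>C\<bar> * M) * (real N ^ 2 * \<rho>^N)" by (simp add: power2_eq_square)
        also have "\<dots> \<le> (\<bar>C\<bar> * M) * \<delta>"
          using elim M0 by (intro mult_left_mono) auto
        also have "\<dots> \<le> \<epsilon>"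
        proof -
          have "\<delta> \<le> \<epsilon> / (\<bar>C\<bar> * M + 1)" unfolding \<delta>_def by simp
          then have "(\<bar>C\<bar> * M) * \<delta> \<le> (\<bar>C\<bar> * M) * (\<epsilon> / (\<bar>C\<bar> * M + 1))"
            using M0 by (intro mult_left_mono) auto
          also have "\<dots> \<le> \<epsilon>"
          proof -
            have p: "0 < \<bar>C\<bar> * M + 1" using M0 by (simp add: add_nonneg_pos)
            have "(\<bar>C\<bar> * M) * \<epsilon> \<le> \<epsilon> * (\<bar>C\<bar> * M + 1)" using \<open>\<epsilon> > 0\<close> by (simp add: algebra_simps)
            then show ?thesis using p by (simp add: divide_le_eq mult.commute mult.left_commute)
          qed
          finally show ?thesis .
        qed
        finally show "\<bar>\<Sum>a = 1..N - 1. real (N choose a) * b N a q * q powi (int (a * (N - a)) + s)\<bar> \<le> \<epsilon>" .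
      qed
    qed
  qed
qed

end
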